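(* Let $\ell\ge 1$ and let $G$ be a cyclically $\ell$-edge-connected cubic graph with at least $2\ell+2$ vertices. Let $v_1v_2v_3v_4$ be a path in $G$ (on four distinct vertices), let $v_1'$ be the neighbor of $v_2$ different from $v_1$ and $v_3$, and let $v_4'$ be the neighbor of $v_3$ different from $v_2$ and $v_4$. Let $G'$ be the graph obtained from $G$ by splitting off the path $v_1v_2v_3v_4$. If $E(A',B')$ is a cyclic $\ell'$-edge-cut of $G'$ with $\ell'<\ell$, then $\ell'\ge \ell-2$, and neither the edge $v_1v_4$ nor the edge $v_1'v_4'$ belongs to $E(A',B')$.
   Context: Graphs may have parallel edges. For a partition $\{A,B\}$ of $V(G)$, $E(A,B)$ is the set of edges with one end in $A$ and the other in $B$; it is an $\ell$-edge-cut if it has exactly $\ell$ edges, and it is cyclic if both $G[A]$ and $G[B]$ contain a cycle. $G$ is cyclically $\ell$-edge-connected if it has no cyclic edge-cut of size less than $\ell$. Splitting off a path $v_1v_2v_3v_4$ in a cubic graph $G$: remove the vertices $v_2,v_3$ (with incident edges) and add the edges $v_1v_4$ and $v_1'v_4'$, where $v_1'$ is the neighbor of $v_2$ other than $v_1,v_3$ and $v_4'$ is the neighbor of $v_3$ other than $v_2,v_4$. *)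

theory Defs
  imports Main
begin

text \<open>Multigraphs (parallel edges and loops representable): a vertex set V,
an edge set E of abstract edge names, and an endpoint map ends : E -> V x V
(the order of the pair is irrelevant).\<close>

definition multigraph :: "'v set \<Rightarrow> 'e set \<Rightarrow> ('e \<Rightarrow> 'v \<times> 'v) \<Rightarrow> bool" where
  "multigraph V E ends \<longleftrightarrow> finite V \<and> finite E \<and>
     (\<forall>e\<in>E. fst (ends e) \<in> V \<and> snd (ends e) \<in> V)"

definition loopless :: "'e set \<Rightarrow> ('e \<Rightarrow> 'v \<times> 'v) \<Rightarrow> bool" where
  "loopless E ends \<longleftrightarrow> (\<forall>e\<in>E. fst (ends e) \<noteq> snd (ends e))"

text \<open>Degree; a loop counts twice.\<close>
definition degree :: "'e set \<Rightarrow> ('e \<Rightarrow> 'v \<times> 'v) \<Rightarrow> 'v \<Rightarrow> nat" where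
  "degree E ends v = card {e\<in>E. fst (ends e) = v} + card {e\<in>E. snd (ends e) = v}"

definition cubic :: "'v set \<Rightarrow> 'e set \<Rightarrow> ('e \<Rightarrow> 'v \<times> 'v) \<Rightarrow> bool" where
  "cubic V E ends \<longleftrightarrow> (\<forall>v\<in>V. degree E ends v = 3)"

definition joins :: "('e \<Rightarrow> 'v \<times> 'v) \<Rightarrow> 'e \<Rightarrow> 'v \<Rightarrow> 'v \<Rightarrow> bool" where
  "joins ends e u w \<longleftrightarrow> ends e = (u, w) \<or> ends e = (w, u)"

text \<open>The induced subgraph on A contains a cycle: distinct vertices
 vs!0,...,vs!(k-1) in A and distinct edges es!i of E joining vs!i and
 vs!((i+1) mod k).  k = 1 is a loop, k = 2 a pair of parallel edges.\<close>
definition has_cycle :: "'e set \<Rightarrow> ('e \<Rightarrow> 'v \<times> 'v) \<Rightarrow> 'v set \<Rightarrow> bool" where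
  "has_cycle E ends A \<longleftrightarrow> (\<exists>vs es. length vs \<ge> 1 \<and> length es = length vs \<and>
      distinct vs \<and> distinct es \<and> set vs \<subseteq> A \<and> set es \<subseteq> E \<and>
      (\<forall>i < length vs. joins ends (es ! i) (vs ! i) (vs ! ((i + 1) mod length vs))))"

definition cut_edges :: "'e set \<Rightarrow> ('e \<Rightarrow> 'v \<times> 'v) \<Rightarrow> 'v set \<Rightarrow> 'v set \<Rightarrow> 'e set" where
  "cut_edges E ends A B = {e\<in>E. (fst (ends e) \<in> A \<and> snd (ends e) \<in> B) \<or>
                                  (fst (ends e) \<in> B \<and> snd (ends e) \<in> A)}"

definition vpartition :: "'v set \<Rightarrow> 'v set \<Rightarrow> 'v set \<Rightarrow> bool" where
  "vpartition V A B \<longleftrightarrow> A \<union> B = V \<and> A \<inter> B = {} \<and> A \<noteq> {} \<and> B \<noteq> {}"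

definition cyclic_cut :: "'v set \<Rightarrow> 'e set \<Rightarrow> ('e \<Rightarrow> 'v \<times> 'v) \<Rightarrow> 'v set \<Rightarrow> 'v set \<Rightarrow> bool" where
  "cyclic_cut V E ends A B \<longleftrightarrow> vpartition V A B \<and> has_cycle E ends A \<and> has_cycle E ends B"

definition cyc_edge_connected :: "nat \<Rightarrow> 'v set \<Rightarrow> 'e set \<Rightarrow> ('e \<Rightarrow> 'v \<times> 'v) \<Rightarrow> bool" where
  "cyc_edge_connected l V E ends \<longleftrightarrow>
     (\<forall>A B. cyclic_cut V E ends A B \<longrightarrow> card (cut_edges E ends A B) \<ge> l)"

text \<open>Splitting off the path v1 v2 v3 v4 (with v1' the third neighbour of v2 and
 v4' the third neighbour of v3): delete v2, v3 and their incident edges; old edges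
 are tagged Inl, the new edge v1v4 is Inr True and the new edge v1'v4' is Inr False.\<close>
definition split_V :: "'v set \<Rightarrow> 'v \<Rightarrow> 'v \<Rightarrow> 'v set" where
  "split_V V v2 v3 = V - {v2, v3}"

definition split_E :: "'e set \<Rightarrow> ('e \<Rightarrow> 'v \<times> 'v) \<Rightarrow> 'v \<Rightarrow> 'v \<Rightarrow> ('e + bool) set" where
  "split_E E ends v2 v3 =
     Inl ` {e\<in>E. fst (ends e) \<notin> {v2, v3} \<and> snd (ends e) \<notin> {v2, v3}} \<union> {Inr True, Inr False}"

definition split_ends :: "('e \<Rightarrow> 'v \<times> 'v) \<Rightarrow> 'v \<Rightarrow> 'v \<Rightarrow> 'v \<Rightarrow> 'v \<Rightarrow> ('e + bool) \<Rightarrow> 'v \<times> 'v" where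
  "split_ends ends v1 v4 v1' v4' x =
     (case x of Inl e \<Rightarrow> ends e | Inr True \<Rightarrow> (v1, v4) | Inr False \<Rightarrow> (v1', v4'))"

end

theory Submission
  imports Defs
begin


definition inc :: "('e \<Rightarrow> 'v \<times> 'v) \<Rightarrow> 'e \<Rightarrow> 'v \<Rightarrow> bool" where
  "inc ends e u \<longleftrightarrow> fst (ends e) = u \<or> snd (ends e) = u"
definition inside :: "('e \<Rightarrow> 'v \<times> 'v) \<Rightarrow> 'v set \<Rightarrow> 'e \<Rightarrow> bool" where
  "inside ends T e \<longleftrightarrow> fst (ends e) \<in> T \<and> snd (ends e) \<in> T"
definition md2 :: "'e set \<Rightarrow> ('e \<Rightarrow> 'v \<times> 'v) \<Rightarrow> 'v set \<Rightarrow> bool" where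
  "md2 F ends T \<longleftrightarrow> T \<noteq> {} \<and> (\<forall>u\<in>T. \<exists>e1\<in>F. \<exists>e2\<in>F. e1 \<noteq> e2 \<and> inc ends e1 u \<and> inc ends e2 u
      \<and> inside ends T e1 \<and> inside ends T e2)"

lemma has_cycle_mono: "has_cycle F ends A \<Longrightarrow> A \<subseteq> B \<Longrightarrow> has_cycle F ends B"
  unfolding has_cycle_def by blast

lemma joins_inj: "joins ends e a b \<Longrightarrow> joins ends e c d \<Longrightarrow> (a = c \<and> b = d) \<or> (a = d \<and> b = c)"
  unfolding joins_def by auto

lemma md2_cycle:
  assumes fin: "finite T" and md: "md2 F ends T" and ll: "\<forall>e\<in>F. fst (ends e) \<noteq> snd (ends e)"
  shows "has_cycle F ends T"
proof -
  define other where "other e u = (if fst (ends e) = u then snd (ends e) else fst (ends e))" for e u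
  have ex: "\<exists>e'. e'\<in>F \<and> e'\<noteq>e \<and> inc ends e' u \<and> inside ends T e'" if "u\<in>T" for u e
    using md that unfolding md2_def by metis
  define nx where "nx u e = (SOME e'. e'\<in>F \<and> e'\<noteq>e \<and> inc ends e' u \<and> inside ends T e')" for u e
  have nx: "nx u e \<in> F \<and> nx u e \<noteq> e \<and> inc ends (nx u e) u \<and> inside ends T (nx u e)" if "u\<in>T" for u e
    using someI_ex[OF ex[OF that]] unfolding nx_def by blast
  define step where "step p = (other (nx (fst p) (snd p)) (fst p), nx (fst p) (snd p))" for p
  obtain u0 where u0: "u0 \<in> T" using md unfolding md2_def by auto
  define W where "W n = (step ^^ n) (u0, undefined)" for n
  define x where "x n = fst (W n)" for n
  define eps where "eps n = snd (W n)" for n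
  have xs: "x (Suc n) = other (nx (x n) (eps n)) (x n)" "eps (Suc n) = nx (x n) (eps n)" for n
    by (simp_all add: x_def eps_def W_def step_def)
  have xT: "x n \<in> T" for n
  proof (induction n)
    case 0 then show ?case using u0 by (simp add: x_def W_def)
  next
    case (Suc n)
    then show ?case using nx[OF Suc] unfolding xs other_def inside_def by auto
  qed
  have eps: "eps (Suc n) \<in> F \<and> eps (Suc n) \<noteq> eps n \<and> joins ends (eps (Suc n)) (x n) (x (Suc n))" for n
    using nx[OF xT[of n]] unfolding xs other_def inc_def joins_def by (auto simp: prod_eq_iff)
  have "\<not> inj x"
  proof
    assume "inj x"
    then have "finite (UNIV :: nat set)"
      using finite_imageD[of x UNIV] finite_subset[OF _ fin] xT by blast
    then show False by simp
  qed
  then obtain a b where ab: "a \<noteq> b" "x a = x b" unfolding inj_def by blast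
  have exj: "\<exists>i<max a b. x i = x (max a b)"
    proof (cases "a < b")
    case True then show ?thesis using ab by (auto simp: max_def)
  next
    case False then have "b < a" using ab by simp
    then show ?thesis using ab by (auto simp: max_def intro!: exI[of _ b])
  qed
  define J where "J = (LEAST j. \<exists>i<j. x i = x j)"
  have "\<exists>i<J. x i = x J" unfolding J_def by (rule LeastI_ex) (use exj in blast)
  then obtain I where I: "I < J" "x I = x J" by blast
  have minJ: "x s \<noteq> x t" if "s < t" "t < J" for s t
  proof
    assume "x s = x t"
    then have "\<exists>i<t. x i = x t" using that by blast
    then have "J \<le> t" unfolding J_def by (rule Least_le)
    then show False using that by simp
  qed
  define L where "L = J - I"
  have L1: "L \<ge> 1" using I by (simp add: L_def)
  define vs where "vs = map (\<lambda>t. x (I+t)) [0..<L]"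
  define es where "es = map (\<lambda>t. eps (I+t+1)) [0..<L]"
  have dvs: "distinct vs" unfolding vs_def distinct_map
  proof
    show "inj_on (\<lambda>t. x (I + t)) (set [0..<L])"
    proof (rule inj_onI)
      fix s t assume st: "s \<in> set [0..<L]" "t \<in> set [0..<L]" "x (I + s) = x (I + t)"
      show "s = t"
      proof (rule ccontr)
        assume "s \<noteq> t"
        then consider "s < t" | "t < s" by linarith
        then show False
        proof cases
          case 1 then have "I+t < J" using st by (simp add: L_def)
          then show False using 1 st minJ[of "I+s" "I+t"] by simp
        next
          case 2 then have "I+s < J" using st by (simp add: L_def)
          then show False using 2 st minJ[of "I+t" "I+s"] by simp
        qed
      qed
    qed
  qed simp
  have des: "distinct es" unfolding es_def distinct_map
  proof
    show "inj_on (\<lambda>t. eps (I + t + 1)) (set [0..<L])"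
    proof (rule inj_onI)
      have key: False if st: "s < t" "t < L" "eps (I + s + 1) = eps (I + t + 1)" for s t
      proof (cases "t = s + 1")
        case True
        then show False using eps[of "I+s+1"] st by simp
      next
        case False
        have j1: "joins ends (eps (I+s+1)) (x (I+s)) (x (I+s+1))" using eps[of "I+s"] by simp
        have j2: "joins ends (eps (I+s+1)) (x (I+t)) (x (I+t+1))" using eps[of "I+t"] st by simp
        have IJ: "I+t < J" using st by (simp add: L_def)
        have "x (I+s) \<noteq> x (I+t)" using minJ[of "I+s" "I+t"] st IJ by simp
        then have "x (I+s+1) = x (I+t)" using joins_inj[OF j1 j2] by blast
        moreover have "I+s+1 < I+t" using st False by simp
        ultimately show False using minJ[of "I+s+1" "I+t"] IJ by simp
      qed
      fix s t assume st: "s \<in> set [0..<L]" "t \<in> set [0..<L]" "eps (I + s + 1) = eps (I + t + 1)"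
      show "s = t"
      proof (rule ccontr)
        assume "s \<noteq> t"
        then consider "s < t" | "t < s" by linarith
        then show False using st key[of s t] key[of t s] by (cases, auto)
      qed
    qed
  qed simp
  show ?thesis unfolding has_cycle_def
  proof (intro exI conjI allI impI)
    show "1 \<le> length vs" using L1 by (simp add: vs_def)
    show "length es = length vs" by (simp add: vs_def es_def)
    show "distinct vs" by (rule dvs)
    show "distinct es" by (rule des)
    show "set vs \<subseteq> T" using xT by (auto simp: vs_def)
    show "set es \<subseteq> F" using eps by (auto simp: es_def)
    fix t assume t: "t < length vs"
    then have tL: "t < L" by (simp add: vs_def)
    have j: "joins ends (eps (I+t+1)) (x (I+t)) (x (I+t+1))" using eps[of "I+t"] by simp
    show "joins ends (es ! t) (vs ! t) (vs ! ((t + 1) mod length vs))"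
    proof (cases "t + 1 < L")
      case True
      then show ?thesis using j tL by (simp add: vs_def es_def)
    next
      case False
      then have "t + 1 = L" using tL by simp
      then have "I+t+1 = J" using I by (simp add: L_def)
      then have "x (I+t+1) = x I" using I by simp
      then show ?thesis using j tL L1 \<open>t+1 = L\<close> by (simp add: vs_def es_def)
    qed
  qed
qed

lemma cycle_md2:
  assumes "has_cycle F ends S"
  shows "(\<exists>e\<in>F. fst (ends e) = snd (ends e) \<and> fst (ends e) \<in> S) \<or> (\<exists>T\<subseteq>S. finite T \<and> md2 F ends T)"
proof -
  obtain vs es where c: "length vs \<ge> 1" "length es = length vs" "distinct vs" "distinct es"
    "set vs \<subseteq> S" "set es \<subseteq> F"
    "\<forall>i < length vs. joins ends (es ! i) (vs ! i) (vs ! ((i + 1) mod length vs))"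
    using assms unfolding has_cycle_def by blast
  define L where "L = length vs"
  show ?thesis
  proof (cases "L = 1")
    case True
    then have "joins ends (es ! 0) (vs ! 0) (vs ! 0)" using c(7) by (simp add: L_def)
    moreover have "es ! 0 \<in> F" using c True by (auto simp: L_def)
    moreover have "vs ! 0 \<in> S" using c True by (auto simp: L_def)
    ultimately show ?thesis unfolding joins_def by (intro disjI1 bexI[of _ "es!0"]) auto
  next
    case False
    then have L2: "L \<ge> 2" using c(1) by (simp add: L_def)
    have "md2 F ends (set vs)" unfolding md2_def
    proof (intro conjI ballI)
      show "set vs \<noteq> {}" using c(1) by auto
      fix u assume "u \<in> set vs"
      then obtain t where t: "t < L" "u = vs ! t" by (auto simp: in_set_conv_nth L_def)
      define t' where "t' = (if t = 0 then L - 1 else t - 1)"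
      have t'L: "t' < L" and t'ne: "t' \<noteq> t" and t'1: "(t' + 1) mod L = t"
        using t L2 by (auto simp: t'_def)
      have j1: "joins ends (es ! t) (vs ! t) (vs ! ((t + 1) mod L))" using c(7) t by (simp add: L_def)
      have j2: "joins ends (es ! t') (vs ! t') (vs ! t)" using c(7) t'L t'1 by (metis L_def)
      have "(t + 1) mod L < L" using L2 by simp
      then have m1: "vs ! ((t + 1) mod L) \<in> set vs" by (intro nth_mem) (simp add: L_def)
      have m2: "vs ! t' \<in> set vs" "vs ! t \<in> set vs" using t'L t by (auto simp: L_def)
      have ne: "es ! t \<noteq> es ! t'" using c(2,4) t t'L t'ne by (simp add: L_def nth_eq_iff_index_eq)
      have "es ! t \<in> F" "es ! t' \<in> F" using c(2,6) t t'L by (auto simp: L_def)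
      then show "\<exists>e1\<in>F. \<exists>e2\<in>F. e1 \<noteq> e2 \<and> inc ends e1 u \<and> inc ends e2 u
             \<and> inside ends (set vs) e1 \<and> inside ends (set vs) e2"
      proof -
        have "inc ends (es!t) u \<and> inc ends (es!t') u \<and> inside ends (set vs) (es!t) \<and> inside ends (set vs) (es!t')"
          using j1 j2 m1 m2 t unfolding joins_def inc_def inside_def by auto
        then show ?thesis using ne \<open>es ! t \<in> F\<close> \<open>es ! t' \<in> F\<close> by blast
      qed
    qed
    then show ?thesis using c(5) by blast
  qed
qed

lemma forest_bound:
  assumes finF: "finite F" and ll: "\<forall>e\<in>F. fst (ends e) \<noteq> snd (ends e)"
  shows "finite S \<Longrightarrow> S \<noteq> {} \<Longrightarrow> \<not> has_cycle F ends S \<Longrightarrow> card {e\<in>F. inside ends S e} + 1 \<le> card S"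
proof (induction "card S" arbitrary: S rule: less_induct)
  case less
  show ?case
  proof (cases "md2 F ends S")
    case True
    then show ?thesis using md2_cycle[OF less(2) True ll] less(4) by blast
  next
    case False
    then obtain u where u: "u \<in> S" and few: "\<not>(\<exists>e1\<in>F. \<exists>e2\<in>F. e1 \<noteq> e2 \<and> inc ends e1 u \<and> inc ends e2 u
      \<and> inside ends S e1 \<and> inside ends S e2)" using less(3) unfolding md2_def by blast
    define X where "X = {e\<in>F. inside ends S e \<and> inc ends e u}"
    have finX: "finite X" using finF by (simp add: X_def)
    have X1: "card X \<le> 1" using few finX card_le_Suc0_iff_eq[OF finX] by (auto simp: X_def)
    define S' where "S' = S - {u}"
    have sub: "{e\<in>F. inside ends S e} \<subseteq> {e\<in>F. inside ends S' e} \<union> X"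
      by (auto simp: X_def S'_def inside_def inc_def)
    have "card {e\<in>F. inside ends S e} \<le> card ({e\<in>F. inside ends S' e} \<union> X)"
      by (rule card_mono[OF _ sub]) (use finF finX in simp)
    then have c1: "card {e\<in>F. inside ends S e} \<le> card {e\<in>F. inside ends S' e} + card X"
      using card_Un_le[of "{e\<in>F. inside ends S' e}" X] by linarith
    have cS: "card S = card S' + 1" using u less(2) card_gt_0_iff[of S] by (auto simp: S'_def)
    show ?thesis
    proof (cases "S' = {}")
      case True
      then have "S = {u}" using u by (auto simp: S'_def)
      then have "{e\<in>F. inside ends S e} = {}" using ll by (auto simp: inside_def)
      then have "card {e\<in>F. inside ends S e} = 0" by (metis card.empty)
      then show ?thesis using cS True by linarith
    next
      case False
      have "\<not> has_cycle F ends S'" using less(4) has_cycle_mono[of F ends S' S] by (auto simp: S'_def)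
      then have "card {e\<in>F. inside ends S' e} + 1 \<le> card S'"
        using less(1)[of S'] False less(2) cS by (simp add: S'_def)
      then show ?thesis using c1 X1 cS by simp
    qed
  qed
qed

lemma cut_edges_sym: "cut_edges E ends A B = cut_edges E ends B A"
  unfolding cut_edges_def by auto

lemma cut_count:
  assumes mg: "multigraph V E ends" and ll: "loopless E ends" and cu: "cubic V E ends"
    and S: "S \<subseteq> V" "S \<noteq> {}" and nc: "\<not> has_cycle E ends S"
  shows "card S + 2 \<le> card (cut_edges E ends S (V - S))"
proof -
  have finV: "finite V" and finE: "finite E" and inV: "\<forall>e\<in>E. fst (ends e) \<in> V \<and> snd (ends e) \<in> V"
    using mg by (auto simp: multigraph_def)
  have finS: "finite S" using S finV finite_subset by blast
  have deg: "card {e\<in>E. fst (ends e) = v} + card {e\<in>E. snd (ends e) = v} = 3" if "v \<in> S" for v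
    using cu that S unfolding cubic_def degree_def by auto
  have sf: "card {e\<in>E. fst (ends e) \<in> S} = (\<Sum>v\<in>S. card {e\<in>E. fst (ends e) = v})"
  proof -
    have "{e\<in>E. fst (ends e) \<in> S} = (\<Union>v\<in>S. {e\<in>E. fst (ends e) = v})" by auto
    then show ?thesis using card_UN_disjoint[OF finS, of "\<lambda>v. {e\<in>E. fst (ends e) = v}"] finE by auto
  qed
  have ss: "card {e\<in>E. snd (ends e) \<in> S} = (\<Sum>v\<in>S. card {e\<in>E. snd (ends e) = v})"
  proof -
    have "{e\<in>E. snd (ends e) \<in> S} = (\<Union>v\<in>S. {e\<in>E. snd (ends e) = v})" by auto
    then show ?thesis using card_UN_disjoint[OF finS, of "\<lambda>v. {e\<in>E. snd (ends e) = v}"] finE by auto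
  qed
  have tot: "card {e\<in>E. fst (ends e) \<in> S} + card {e\<in>E. snd (ends e) \<in> S} = 3 * card S"
    using sf ss deg by (simp add: sum.distrib[symmetric])
  define In where "In = {e\<in>E. inside ends S e}"
  define C1 where "C1 = {e\<in>E. fst (ends e) \<in> S \<and> snd (ends e) \<notin> S}"
  define C2 where "C2 = {e\<in>E. fst (ends e) \<notin> S \<and> snd (ends e) \<in> S}"
  have "{e\<in>E. fst (ends e) \<in> S} = In \<union> C1" by (auto simp: In_def C1_def inside_def)
  then have a1: "card {e\<in>E. fst (ends e) \<in> S} = card In + card C1"
    using finE by (simp add: card_Un_disjoint In_def C1_def inside_def disjoint_iff)
  have "{e\<in>E. snd (ends e) \<in> S} = In \<union> C2" by (auto simp: In_def C2_def inside_def)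
  then have a2: "card {e\<in>E. snd (ends e) \<in> S} = card In + card C2"
    using finE by (simp add: card_Un_disjoint In_def C2_def inside_def disjoint_iff)
  have "cut_edges E ends S (V - S) = C1 \<union> C2" using inV by (auto simp: cut_edges_def C1_def C2_def)
  then have a3: "card (cut_edges E ends S (V - S)) = card C1 + card C2"
    using finE by (simp add: card_Un_disjoint C1_def C2_def disjoint_iff)
  have fb: "card In + 1 \<le> card S" unfolding In_def
    using forest_bound[OF finE] ll finS S(2) nc by (auto simp: loopless_def)
  show ?thesis using tot a1 a2 a3 fb by linarith
qed

lemma three_edges:
  assumes mg: "multigraph V E ends" and ll: "loopless E ends" and cu: "cubic V E ends"
    and v: "v \<in> V" and abc: "a \<in> E" "b \<in> E" "c \<in> E" "distinct [a, b, c]"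
    and i: "inc ends a v" "inc ends b v" "inc ends c v"
  shows "{e\<in>E. inc ends e v} = {a, b, c}"
proof -
  have finE: "finite E" using mg by (simp add: multigraph_def)
  have "{e\<in>E. inc ends e v} = {e\<in>E. fst (ends e) = v} \<union> {e\<in>E. snd (ends e) = v}"
    by (auto simp: inc_def)
  moreover have "{e\<in>E. fst (ends e) = v} \<inter> {e\<in>E. snd (ends e) = v} = {}"
    using ll by (auto simp: loopless_def)
  ultimately have "card {e\<in>E. inc ends e v} = 3"
    using cu v finE unfolding cubic_def degree_def by (simp add: card_Un_disjoint)
  moreover have "{a, b, c} \<subseteq> {e\<in>E. inc ends e v}" using abc i by auto
  moreover have "card {a, b, c} = 3" using abc(4) by simp
  ultimately show ?thesis using finE by (metis (no_types, lifting) card_subset_eq finite_subset mem_Collect_eq subsetI)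
qed


lemma final_arith:
  fixes oo k l cA cB nA nB nV :: nat
  assumes "oo + of_bool (p1 \<noteq> p4) + of_bool (q1 \<noteq> q4) \<le> k" "k < l"
    "cA \<le> oo + of_bool (\<not>p1) + of_bool (\<not>q1) + of_bool (\<not>p4) + of_bool (\<not>q4)"
    "cB \<le> oo + of_bool p1 + of_bool q1 + of_bool p4 + of_bool q4"
    "hB \<or> (\<not>p1 \<and> \<not>p4) \<or> (\<not>q1 \<and> \<not>q4)"
    "hA \<or> (p1 \<and> p4) \<or> (q1 \<and> q4)"
    "hB \<Longrightarrow> l \<le> cA" "hA \<Longrightarrow> l \<le> cB"
    "\<not> hB \<Longrightarrow> nB + 2 \<le> cA" "\<not> hA \<Longrightarrow> nA + 2 \<le> cB"
    "nV = nA + nB + 2" "2 * l + 2 \<le> nV"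
  shows "l \<le> k + 2 \<and> p1 = p4 \<and> q1 = q4"
  using assms by (cases p1; cases p4; cases q1; cases q4; cases hA; cases hB) auto


lemma card_Un5: "card (X0 \<union> X1 \<union> X2 \<union> X3 \<union> X4) \<le> card X0 + card X1 + card X2 + card X3 + card X4"
  by (meson add_le_mono card_Un_le le_refl order_trans)

lemma card_kb:
  fixes C :: "('a + bool) set"
  assumes finC: "finite C"
  shows "card (Inl -` C) + of_bool (Inr True \<in> C) + of_bool (Inr False \<in> C) \<le> card C"
proof -
  define R :: "('a + bool) set" where "R = (if Inr True \<in> C then {Inr True} else {}) \<union> (if Inr False \<in> C then {Inr False} else {})"
  define Y where "Y = Inl ` (Inl -` C) \<union> R"
  have "Y \<subseteq> C" by (auto simp: Y_def R_def)
  then have Yle: "card Y \<le> card C" using finC card_mono by blast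
  have d: "Inl ` (Inl -` C) \<inter> R = {}" by (auto simp: R_def)
  have f1: "finite (Inl ` (Inl -` C) :: ('a + bool) set)" using finC by (intro finite_imageI finite_vimageI) auto
  have f2: "finite R" by (simp add: R_def)
  have "card Y = card (Inl ` (Inl -` C) :: ('a + bool) set) + card R" unfolding Y_def using card_Un_disjoint[OF f1 f2 d] .
  moreover have "card (Inl ` (Inl -` C) :: ('a + bool) set) = card (Inl -` C)" by (rule card_image) simp
  moreover have "card R = of_bool (Inr True \<in> C) + of_bool (Inr False \<in> C)" by (simp add: R_def)
  ultimately show ?thesis using Yle by simp
qed

theorem mainTheorem3:
  fixes V :: "'v set" and E :: "'e set" and ends :: "'e \<Rightarrow> 'v \<times> 'v"
    and l :: nat and v1 v2 v3 v4 v1' v4' :: 'v and e12 e23 e34 f2 f3 :: 'e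
  assumes "l \<ge> 1"
    and "multigraph V E ends" and "loopless E ends" and "cubic V E ends"
    and "cyc_edge_connected l V E ends"
    and "card V \<ge> 2 * l + 2"
    and "v1 \<in> V" "v2 \<in> V" "v3 \<in> V" "v4 \<in> V" "distinct [v1, v2, v3, v4]"
    and "e12 \<in> E" "e23 \<in> E" "e34 \<in> E"
    and "joins ends e12 v1 v2" "joins ends e23 v2 v3" "joins ends e34 v3 v4"
    and "f2 \<in> E" "f2 \<notin> {e12, e23}" "joins ends f2 v2 v1'" "v1' \<notin> {v1, v3}"
    and "f3 \<in> E" "f3 \<notin> {e23, e34}" "joins ends f3 v3 v4'" "v4' \<notin> {v2, v4}"
    and "cyclic_cut (split_V V v2 v3) (split_E E ends v2 v3) (split_ends ends v1 v4 v1' v4') A' B'"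
    and "card (cut_edges (split_E E ends v2 v3) (split_ends ends v1 v4 v1' v4') A' B') < l"
  shows "card (cut_edges (split_E E ends v2 v3) (split_ends ends v1 v4 v1' v4') A' B') + 2 \<ge> l
       \<and> Inr True \<notin> cut_edges (split_E E ends v2 v3) (split_ends ends v1 v4 v1' v4') A' B'
       \<and> Inr False \<notin> cut_edges (split_E E ends v2 v3) (split_ends ends v1 v4 v1' v4') A' B'"
proof -
  note A = assms
  let ?V' = "split_V V v2 v3"
  let ?E' = "split_E E ends v2 v3"
  let ?n = "split_ends ends v1 v4 v1' v4'"
  have mg: "multigraph V E ends" and ll: "loopless E ends" and cu: "cubic V E ends" using A by auto
  have finV: "finite V" and finE: "finite E" and inV: "\<And>e. e \<in> E \<Longrightarrow> fst (ends e) \<in> V \<and> snd (ends e) \<in> V"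
    using mg by (auto simp: multigraph_def)
  have llE: "\<And>e. e \<in> E \<Longrightarrow> fst (ends e) \<noteq> snd (ends e)" using ll by (auto simp: loopless_def)
  have dv: "v1 \<noteq> v2" "v1 \<noteq> v3" "v1 \<noteq> v4" "v2 \<noteq> v3" "v2 \<noteq> v4" "v3 \<noteq> v4" using A(11) by auto
  have j: "ends e12 = (v1, v2) \<or> ends e12 = (v2, v1)" "ends e23 = (v2, v3) \<or> ends e23 = (v3, v2)"
    "ends e34 = (v3, v4) \<or> ends e34 = (v4, v3)" "ends f2 = (v2, v1') \<or> ends f2 = (v1', v2)"
    "ends f3 = (v3, v4') \<or> ends f3 = (v4', v3)"
    using A(15,16,17,20,24) by (auto simp: joins_def)
  have jj: "(fst (ends e12) = v1 \<and> snd (ends e12) = v2) \<or> (fst (ends e12) = v2 \<and> snd (ends e12) = v1)"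
    "(fst (ends e23) = v2 \<and> snd (ends e23) = v3) \<or> (fst (ends e23) = v3 \<and> snd (ends e23) = v2)"
    "(fst (ends e34) = v3 \<and> snd (ends e34) = v4) \<or> (fst (ends e34) = v4 \<and> snd (ends e34) = v3)"
    "(fst (ends f2) = v2 \<and> snd (ends f2) = v1') \<or> (fst (ends f2) = v1' \<and> snd (ends f2) = v2)"
    "(fst (ends f3) = v3 \<and> snd (ends f3) = v4') \<or> (fst (ends f3) = v4' \<and> snd (ends f3) = v3)"
    using j by auto
  have v1'V: "v1' \<in> V" using inV[OF A(18)] j(4) by auto
  have v4'V: "v4' \<in> V" using inV[OF A(22)] j(5) by auto
  have v1'ne: "v1' \<noteq> v2" using llE[OF A(18)] j(4) by auto
  have v4'ne: "v4' \<noteq> v3" using llE[OF A(22)] j(5) by auto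
  have dv2: "v1' \<noteq> v1" "v1' \<noteq> v3" "v4' \<noteq> v2" "v4' \<noteq> v4" using A(21,25) by auto
  have de: "e12 \<noteq> e23" "e12 \<noteq> e34" "e23 \<noteq> e34" "f2 \<noteq> e12" "f2 \<noteq> e23" "f2 \<noteq> e34"
     "f2 \<noteq> f3" "f3 \<noteq> e12" "f3 \<noteq> e23" "f3 \<noteq> e34"
    using j dv dv2 v1'ne v4'ne by (auto simp: prod_eq_iff)

  have ic: "inc ends e12 v2" "inc ends e23 v2" "inc ends f2 v2" "inc ends e23 v3" "inc ends e34 v3" "inc ends f3 v3"
    using j by (auto simp: inc_def)
  have E2: "{e\<in>E. inc ends e v2} = {e12, e23, f2}"
    by (rule three_edges[OF mg ll cu A(8) A(12) A(13) A(18)]) (use de ic in auto)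
  have E3: "{e\<in>E. inc ends e v3} = {e23, e34, f3}"
    by (rule three_edges[OF mg ll cu A(9) A(13) A(14) A(22)]) (use de ic in auto)
  have nE: "\<And>x. (\<lambda>x. case x of Inl e \<Rightarrow> ends e | Inr True \<Rightarrow> (v1, v4) | Inr False \<Rightarrow> (v1', v4')) x = ?n x"
    by (simp add: split_ends_def)
  have nI: "?n (Inl g) = ends g" "?n (Inr True) = (v1, v4)" "?n (Inr False) = (v1', v4')" for g
    by (simp_all add: split_ends_def)
  have EI: "Inl g \<in> ?E' \<longleftrightarrow> g \<in> E \<and> fst (ends g) \<notin> {v2, v3} \<and> snd (ends g) \<notin> {v2, v3}" for g
    by (auto simp: split_E_def)
  have ER: "Inr b \<in> ?E'" for b by (simp add: split_E_def)
  have finE': "finite ?E'" using finE by (simp add: split_E_def)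
  have V'eq: "?V' = V - {v2, v3}" by (simp add: split_V_def)
  have cc: "vpartition ?V' A' B'" "has_cycle ?E' ?n A'" "has_cycle ?E' ?n B'"
    using A(26) by (auto simp: cyclic_cut_def)

  have lift: "has_cycle E ends (S \<union> {v2, v3}) \<and> (has_cycle E ends S \<or> {v1, v4} \<subseteq> S \<or> {v1', v4'} \<subseteq> S)"
    if hc: "has_cycle ?E' ?n S" for S
  proof -
    from cycle_md2[OF hc] consider (loop) e where "e \<in> ?E'" "fst (?n e) = snd (?n e)" "fst (?n e) \<in> S"
      | (md) T where "T \<subseteq> S" "finite T" "md2 ?E' ?n T" by blast
    then show ?thesis
    proof cases
      case loop
      have eq: "v1' = v4' \<and> v1' \<in> S"
      proof (cases e)
        case (Inl g)
        then show ?thesis using loop llE by (auto simp: EI nI)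
      next
        case (Inr b)
        then show ?thesis using loop dv by (cases b) (auto simp: split_ends_def)
      qed
      have "md2 E ends {v1', v2, v3}" unfolding md2_def
      proof (intro conjI ballI)
        fix u assume u: "u \<in> {v1', v2, v3}"
        have i1: "inside ends {v1', v2, v3} e23" "inside ends {v1', v2, v3} f2" "inside ends {v1', v2, v3} f3"
          using j eq by (auto simp: inside_def)
        have "u = v1' \<or> u = v2 \<or> u = v3" using u by auto
        then show "\<exists>e1\<in>E. \<exists>e2\<in>E. e1 \<noteq> e2 \<and> inc ends e1 u \<and> inc ends e2 u \<and> inside ends {v1', v2, v3} e1 \<and> inside ends {v1', v2, v3} e2"
        proof (elim disjE)
          assume "u = v1'" then show ?thesis using A(18,22) de(7) i1 j(4,5) eq
            by (intro bexI[of _ f2] bexI[of _ f3]) (auto simp: inc_def)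
        next
          assume "u = v2" then show ?thesis using A(18,13) de(5) i1 j(2,4)
            by (intro bexI[of _ f2] bexI[of _ e23]) (auto simp: inc_def)
        next
          assume "u = v3" then show ?thesis using A(13,22) de(9) i1 j(2,5)
            by (intro bexI[of _ e23] bexI[of _ f3]) (auto simp: inc_def)
        qed
      qed simp
      then have "has_cycle E ends {v1', v2, v3}" by (rule md2_cycle[rotated]) (use llE in auto)
      then have "has_cycle E ends (S \<union> {v2, v3})" by (rule has_cycle_mono) (use eq in auto)
      then show ?thesis using eq by auto
    next
      case md
      show ?thesis
      proof (cases "{v1, v4} \<subseteq> T \<or> {v1', v4'} \<subseteq> T")
        case False
        have toG: "\<exists>g. e = Inl g \<and> g \<in> E \<and> ends g = ?n e" if "e \<in> ?E'" "inside ?n T e" for e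
        proof (cases e)
          case (Inl g) then show ?thesis using that by (auto simp: EI nI)
        next
          case (Inr b) then show ?thesis using that False by (cases b) (auto simp: nI inside_def)
        qed
        have "md2 E ends T" unfolding md2_def
        proof (intro conjI ballI)
          show "T \<noteq> {}" using md(3) by (simp add: md2_def)
          fix u assume "u \<in> T"
          then obtain e1 e2 where e: "e1 \<in> ?E'" "e2 \<in> ?E'" "e1 \<noteq> e2" "inc ?n e1 u" "inc ?n e2 u"
            "inside ?n T e1" "inside ?n T e2" using md(3) unfolding md2_def by blast
          obtain g1 where g1: "e1 = Inl g1" "g1 \<in> E" "ends g1 = ?n e1" using toG e by blast
          obtain g2 where g2: "e2 = Inl g2" "g2 \<in> E" "ends g2 = ?n e2" using toG e by blast
          show "\<exists>e1\<in>E. \<exists>e2\<in>E. e1 \<noteq> e2 \<and> inc ends e1 u \<and> inc ends e2 u \<and> inside ends T e1 \<and> inside ends T e2"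
            using e g1 g2 by (intro bexI[of _ g1] bexI[of _ g2]) (auto simp: inc_def inside_def)
        qed
        then have hT: "has_cycle E ends T" by (rule md2_cycle[rotated]) (use llE md(2) in auto)
        have "has_cycle E ends S" by (rule has_cycle_mono[OF hT md(1)])
        moreover have "has_cycle E ends (S \<union> {v2, v3})" by (rule has_cycle_mono[OF hT]) (use md(1) in auto)
        ultimately show ?thesis by blast
      next
        case True
        let ?T = "T \<union> {v2, v3}"
        define phi where "phi u e = (case e of Inl g \<Rightarrow> g | Inr b \<Rightarrow> if b then (if u = v1 then e12 else e34) else (if u = v1' then f2 else f3))" for u e
        have ph: "phi u e \<in> E \<and> inc ends (phi u e) u \<and> inside ends ?T (phi u e)"
          if "e \<in> ?E'" "inc ?n e u" "inside ?n T e" for u e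
        proof (cases e)
          case (Inl g) then show ?thesis using that by (auto simp: EI nI phi_def inc_def inside_def)
        next
          case (Inr b) then show ?thesis using that A(12,14,18,22) j(1,3,4,5)
            by (cases b) (auto simp: nI phi_def inc_def inside_def)
        qed
        have phinj: "phi u e1 \<noteq> phi u e2"
          if "e1 \<in> ?E'" "e2 \<in> ?E'" "e1 \<noteq> e2" "inc ?n e1 u" "inc ?n e2 u" for u e1 e2
        proof (cases e1)
          case (Inl g1)
          then show ?thesis
          proof (cases e2)
            case (Inl g2) then show ?thesis using \<open>e1 = Inl g1\<close> that by (simp add: phi_def)
          next
            case (Inr b2) then show ?thesis using \<open>e1 = Inl g1\<close> that j(1,3,4,5)
              by (cases b2) (auto simp: phi_def EI)
          qed
        next
          case (Inr b1)
          then show ?thesis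
          proof (cases e2)
            case (Inl g2) then show ?thesis using \<open>e1 = Inr b1\<close> that j(1,3,4,5)
              by (cases b1) (auto simp: phi_def EI)
          next
            case (Inr b2) then show ?thesis using \<open>e1 = Inr b1\<close> that de
              by (cases b1; cases b2) (auto simp: phi_def)
          qed
        qed
        have "md2 E ends ?T" unfolding md2_def
        proof (intro conjI ballI)
          fix u assume u: "u \<in> ?T"
          have i1: "inside ends ?T e23" using j by (auto simp: inside_def)
          show "\<exists>e1\<in>E. \<exists>e2\<in>E. e1 \<noteq> e2 \<and> inc ends e1 u \<and> inc ends e2 u \<and> inside ends ?T e1 \<and> inside ends ?T e2"
          proof (cases "u \<in> T")
            case True
            then obtain e1 e2 where e: "e1 \<in> ?E'" "e2 \<in> ?E'" "e1 \<noteq> e2" "inc ?n e1 u" "inc ?n e2 u"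
              "inside ?n T e1" "inside ?n T e2" using md(3) unfolding md2_def by blast
            show ?thesis using ph[OF e(1,4,6)] ph[OF e(2,5,7)] phinj[OF e(1-5)] by blast
          next
            case uT: False
            then have "u = v2 \<or> u = v3" using u by auto
            then show ?thesis
            proof (elim disjE)
              assume uv: "u = v2"
              show ?thesis
              proof (cases "v1 \<in> T")
                case True then show ?thesis using uv A(12,13) de(1) i1 j(1) ic(2)
                  by (intro bexI[of _ e12] bexI[of _ e23]) (auto simp: inc_def inside_def)
              next
                case False then have "v1' \<in> T" using \<open>{v1, v4} \<subseteq> T \<or> {v1', v4'} \<subseteq> T\<close> by auto
                then show ?thesis using uv A(18,13) de(5) i1 j(4) ic(2)
                  by (intro bexI[of _ f2] bexI[of _ e23]) (auto simp: inc_def inside_def)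
              qed
            next
              assume uv: "u = v3"
              show ?thesis
              proof (cases "v4 \<in> T")
                case True then show ?thesis using uv A(14,13) de(3) i1 j(3) ic(4)
                  by (intro bexI[of _ e34] bexI[of _ e23]) (auto simp: inc_def inside_def)
              next
                case False then have "v4' \<in> T" using \<open>{v1, v4} \<subseteq> T \<or> {v1', v4'} \<subseteq> T\<close> by auto
                then show ?thesis using uv A(22,13) de(9) i1 j(5) ic(4)
                  by (intro bexI[of _ f3] bexI[of _ e23]) (auto simp: inc_def inside_def)
              qed
            qed
          qed
        qed simp
        then have "has_cycle E ends ?T" by (rule md2_cycle[rotated]) (use llE md(2) in auto)
        then have "has_cycle E ends (S \<union> {v2, v3})" by (rule has_cycle_mono) (use md(1) in auto)
        then show ?thesis using True md(1) by auto
      qed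
    qed
  qed

  have place: "card (cut_edges E ends (P \<union> {v2, v3}) Q) \<le> card (Inl -` cut_edges ?E' ?n P Q)
       + of_bool (v1 \<in> Q) + of_bool (v1' \<in> Q) + of_bool (v4 \<in> Q) + of_bool (v4' \<in> Q)
     \<and> (has_cycle E ends Q \<longrightarrow> l \<le> card (cut_edges E ends (P \<union> {v2, v3}) Q))
     \<and> (\<not> has_cycle E ends Q \<longrightarrow> card Q + 2 \<le> card (cut_edges E ends (P \<union> {v2, v3}) Q))"
    if vp: "vpartition ?V' P Q" and hP: "has_cycle ?E' ?n P" for P Q
  proof (intro conjI impI)
    have PQ: "P \<union> Q = V - {v2, v3}" "P \<inter> Q = {}" "P \<noteq> {}" "Q \<noteq> {}"
      using vp by (auto simp: vpartition_def split_V_def)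
    have Q23: "v2 \<notin> Q" "v3 \<notin> Q" using PQ by auto
    let ?C = "cut_edges ?E' ?n P Q"
    let ?X = "Inl -` ?C \<union> (if v1 \<in> Q then {e12} else {}) \<union> (if v1' \<in> Q then {f2} else {})
       \<union> (if v4 \<in> Q then {e34} else {}) \<union> (if v4' \<in> Q then {f3} else {})"
    have sub: "cut_edges E ends (P \<union> {v2, v3}) Q \<subseteq> ?X"
    proof
      fix e assume e: "e \<in> cut_edges E ends (P \<union> {v2, v3}) Q"
      then have eE: "e \<in> E" and cr: "(fst (ends e) \<in> P \<union> {v2, v3} \<and> snd (ends e) \<in> Q) \<or>
          (fst (ends e) \<in> Q \<and> snd (ends e) \<in> P \<union> {v2, v3})" by (auto simp: cut_edges_def)
      show "e \<in> ?X"
      proof (cases "inc ends e v2")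
        case True
        then have "e \<in> {e12, e23, f2}" using E2 eE by blast
        then consider "e = e12" | "e = e23" | "e = f2" by blast
        then show ?thesis
        proof cases
          case 1 then have "v1 \<in> Q" using cr[unfolded 1] jj(1) Q23 by auto
          then show ?thesis using 1 by simp
        next
          case 2 then show ?thesis using cr[unfolded 2] jj(2) Q23 by auto
        next
          case 3 then have "v1' \<in> Q" using cr[unfolded 3] jj(4) Q23 by auto
          then show ?thesis using 3 by simp
        qed
      next
        case n2: False
        show ?thesis
        proof (cases "inc ends e v3")
          case True
          then have "e \<in> {e23, e34, f3}" using E3 eE by blast
          then consider "e = e23" | "e = e34" | "e = f3" by blast
          then show ?thesis
          proof cases
            case 1 then show ?thesis using cr[unfolded 1] jj(2) Q23 by auto
          next
            case 2 then have "v4 \<in> Q" using cr[unfolded 2] jj(3) Q23 by auto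
            then show ?thesis using 2 by simp
          next
            case 3 then have "v4' \<in> Q" using cr[unfolded 3] jj(5) Q23 by auto
            then show ?thesis using 3 by simp
          qed
        next
          case False
          then have "fst (ends e) \<notin> {v2, v3} \<and> snd (ends e) \<notin> {v2, v3}" using n2 by (auto simp: inc_def)
          then have "Inl e \<in> ?E'" "(fst (ends e) \<in> P \<and> snd (ends e) \<in> Q) \<or> (fst (ends e) \<in> Q \<and> snd (ends e) \<in> P)"
            using eE cr by (auto simp: EI)
          then have "Inl e \<in> ?C" unfolding cut_edges_def by (simp add: nI)
          then show ?thesis by simp
        qed
      qed
    qed
    have "card (cut_edges E ends (P \<union> {v2, v3}) Q) \<le> card ?X"
    proof (rule card_mono[OF _ sub])
      have "finite ?C" using finE' by (simp add: cut_edges_def)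
      then have "finite (Inl -` ?C)" by (rule finite_vimageI) simp
      then show "finite ?X" by simp
    qed
    also have "\<dots> \<le> card (Inl -` ?C) + of_bool (v1 \<in> Q) + of_bool (v1' \<in> Q) + of_bool (v4 \<in> Q) + of_bool (v4' \<in> Q)"
      using card_Un5[of "Inl -` ?C" "if v1 \<in> Q then {e12} else {}" "if v1' \<in> Q then {f2} else {}"
        "if v4 \<in> Q then {e34} else {}" "if v4' \<in> Q then {f3} else {}"] by (simp split: if_splits)
    finally show "card (cut_edges E ends (P \<union> {v2, v3}) Q) \<le> card (Inl -` ?C) + of_bool (v1 \<in> Q) + of_bool (v1' \<in> Q) + of_bool (v4 \<in> Q) + of_bool (v4' \<in> Q)" .
    have vpG: "vpartition V (P \<union> {v2, v3}) Q" using PQ A(8,9) by (auto simp: vpartition_def)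
    have hPG: "has_cycle E ends (P \<union> {v2, v3})" using lift[OF hP] by blast
    show "l \<le> card (cut_edges E ends (P \<union> {v2, v3}) Q)" if "has_cycle E ends Q"
      using A(5) vpG hPG that by (auto simp: cyc_edge_connected_def cyclic_cut_def)
    show "card Q + 2 \<le> card (cut_edges E ends (P \<union> {v2, v3}) Q)" if "\<not> has_cycle E ends Q"
    proof -
      have "V - Q = P \<union> {v2, v3}" using PQ A(8,9) by auto
      then have "cut_edges E ends Q (V - Q) = cut_edges E ends (P \<union> {v2, v3}) Q" by (simp add: cut_edges_sym)
      moreover have "Q \<subseteq> V" using PQ by auto
      ultimately show ?thesis using cut_count[OF mg ll cu _ PQ(4) that] by simp
    qed
  qed
  let ?C = "cut_edges ?E' ?n A' B'"
  have kb: "card (Inl -` ?C) + of_bool (Inr True \<in> ?C) + of_bool (Inr False \<in> ?C) \<le> card ?C"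
    by (rule card_kb) (use finE' in \<open>simp add: cut_edges_def\<close>)
  have mem: "v1 \<in> A' \<union> B'" "v4 \<in> A' \<union> B'" "v1' \<in> A' \<union> B'" "v4' \<in> A' \<union> B'" "A' \<inter> B' = {}"
    using cc(1) A(7,10) v1'V v4'V dv dv2 v1'ne v4'ne by (auto simp: vpartition_def split_V_def)
  have cT: "Inr True \<in> ?C \<longleftrightarrow> (v1 \<in> A') \<noteq> (v4 \<in> A')" using mem ER by (auto simp: cut_edges_def nI)
  have cF: "Inr False \<in> ?C \<longleftrightarrow> (v1' \<in> A') \<noteq> (v4' \<in> A')" using mem ER by (auto simp: cut_edges_def nI)
  have pA: "card (cut_edges E ends (A' \<union> {v2, v3}) B') \<le> card (Inl -` ?C)
       + of_bool (\<not> v1 \<in> A') + of_bool (\<not> v1' \<in> A') + of_bool (\<not> v4 \<in> A') + of_bool (\<not> v4' \<in> A')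
     \<and> (has_cycle E ends B' \<longrightarrow> l \<le> card (cut_edges E ends (A' \<union> {v2, v3}) B'))
     \<and> (\<not> has_cycle E ends B' \<longrightarrow> card B' + 2 \<le> card (cut_edges E ends (A' \<union> {v2, v3}) B'))"
  proof -
    have "v1 \<in> B' \<longleftrightarrow> \<not> v1 \<in> A'" "v4 \<in> B' \<longleftrightarrow> \<not> v4 \<in> A'" "v1' \<in> B' \<longleftrightarrow> \<not> v1' \<in> A'" "v4' \<in> B' \<longleftrightarrow> \<not> v4' \<in> A'"
      using mem by auto
    then show ?thesis using place[OF cc(1) cc(2)] by simp
  qed
  have pB: "card (cut_edges E ends (B' \<union> {v2, v3}) A') \<le> card (Inl -` ?C)
       + of_bool (v1 \<in> A') + of_bool (v1' \<in> A') + of_bool (v4 \<in> A') + of_bool (v4' \<in> A')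
     \<and> (has_cycle E ends A' \<longrightarrow> l \<le> card (cut_edges E ends (B' \<union> {v2, v3}) A'))
     \<and> (\<not> has_cycle E ends A' \<longrightarrow> card A' + 2 \<le> card (cut_edges E ends (B' \<union> {v2, v3}) A'))"
  proof -
    have vp: "vpartition ?V' B' A'" using cc(1) by (auto simp: vpartition_def)
    show ?thesis using place[OF vp cc(3)] by (simp add: cut_edges_sym[of ?E' ?n B' A'])
  qed
  have lA: "has_cycle E ends A' \<or> (v1 \<in> A' \<and> v4 \<in> A') \<or> (v1' \<in> A' \<and> v4' \<in> A')" using lift[OF cc(2)] by auto
  have lB: "has_cycle E ends B' \<or> (\<not> v1 \<in> A' \<and> \<not> v4 \<in> A') \<or> (\<not> v1' \<in> A' \<and> \<not> v4' \<in> A')"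
    using lift[OF cc(3)] mem by auto
  have cV: "card V = card A' + card B' + 2"
  proof -
    have "A' \<union> B' = V - {v2, v3}" using cc(1) by (auto simp: vpartition_def split_V_def)
    moreover have "card (V - {v2, v3}) = card V - 2" using A(8,9) dv finV by (simp add: card_Diff_subset)
    moreover have "card (A' \<union> B') = card A' + card B'"
      using mem(5) finV \<open>A' \<union> B' = V - {v2, v3}\<close> by (metis card_Un_disjoint finite_Diff finite_Un)
    moreover have c2: "card V \<ge> 2" using A(8,9) dv finV
      by (metis card_2_iff empty_subsetI insert_subset card_mono)
    ultimately have "card A' + card B' = card V - 2" by simp
    then show ?thesis using c2 by linarith
  qed
  have fin: "l \<le> card ?C + 2 \<and> (v1 \<in> A') = (v4 \<in> A') \<and> (v1' \<in> A') = (v4' \<in> A')"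
    apply (rule final_arith[where oo = "card (Inl -` ?C)" and cA = "card (cut_edges E ends (A' \<union> {v2, v3}) B')"
       and cB = "card (cut_edges E ends (B' \<union> {v2, v3}) A')" and hA = "has_cycle E ends A'" and hB = "has_cycle E ends B'"
       and nA = "card A'" and nB = "card B'" and nV = "card V"])
    using kb cT cF A(27) pA pB lA lB cV A(6) by auto
  show ?thesis using fin cT cF by auto
qed
end
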